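(* Let $(X,\mathcal T,P,\leq,\{\sigma_x:x\in X\})$ be a typed topological space with $X$ finite. For any subset $D\subseteq X$ and any type $p\in P$ there is a unique partition $D=D_1\cup D_2\cup\dots\cup D_t$ such that each $D_i$ is $p$-closure connected and the union of any two or more of the $D_i$'s is not $p$-closure connected.
   Context: A typed topological space $(X,\mathcal T,P,\leq,\{\sigma_x:x\in X\})$ consists of a topological space $(X,\mathcal T)$, a partially ordered set $(P,\leq)$ of types, and for each $x\in X$ a partial function $\sigma_x:\{O\in\mathcal T:x\in O\}\to P$ such that for all $U,V$ in its domain, $\sigma_x(U)\leq\sigma_x(V)$ iff $U\subseteq V$. $U$ is a type-$p$ neighborhood of $x$ if $U$ is in the domain of $\sigma_x$ and $\sigma_x(U)=p$. $x$ is a $p$-accumulation point of $A$ if every type-$p$ neighborhood of $x$ meets $A$. $p\vdash CL_1(A)=A\cup\{p\text{-accumulation points of }A\}$, $p\vdash CL_n(A)=p\vdash CL_1(p\vdash CL_{n-1}(A))$, $p\vdash tr(A)=\bigcup_{n\ge1}p\vdash CL_n(A)$. Two sets $E,E'$ are $p$-closure disjoint if $p\vdash tr(E)\cap p\vdash tr(E')=\emptyset$. A set $D$ is $p$-closure connected if it cannot be partitioned into two non-empty $p$-closure disjoint subsets. *)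

theory Defs
  imports "HOL-Analysis.Analysis" "HOL-Library.Disjoint_Sets"
begin

text \<open>A typed topological space: a topology T on X = topspace T, a poset (P, le) of types,
  and for every point x a partial function sg x from the open neighbourhoods of x to P
  (None = undefined) that is an order embedding w.r.t. inclusion.\<close>

definition typed_top_space ::
  "'a topology \<Rightarrow> 'p set \<Rightarrow> ('p \<Rightarrow> 'p \<Rightarrow> bool) \<Rightarrow> ('a \<Rightarrow> 'a set \<Rightarrow> 'p option) \<Rightarrow> bool" where
  "typed_top_space T P le sg \<longleftrightarrow>
     (\<forall>p\<in>P. le p p) \<and>
     (\<forall>p\<in>P. \<forall>q\<in>P. le p q \<and> le q p \<longrightarrow> p = q) \<and>
     (\<forall>p\<in>P. \<forall>q\<in>P. \<forall>r\<in>P. le p q \<and> le q r \<longrightarrow> le p r) \<and>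
     (\<forall>x\<in>topspace T. \<forall>U. sg x U \<noteq> None \<longrightarrow>
          openin T U \<and> x \<in> U \<and> the (sg x U) \<in> P) \<and>
     (\<forall>x\<in>topspace T. \<forall>U V. sg x U \<noteq> None \<longrightarrow> sg x V \<noteq> None \<longrightarrow>
          (le (the (sg x U)) (the (sg x V)) \<longleftrightarrow> U \<subseteq> V))"

definition p_acc_point :: "('a \<Rightarrow> 'a set \<Rightarrow> 'p option) \<Rightarrow> 'p \<Rightarrow> 'a \<Rightarrow> 'a set \<Rightarrow> bool" where
  "p_acc_point sg p x A \<longleftrightarrow> (\<forall>U. sg x U = Some p \<longrightarrow> U \<inter> A \<noteq> {})"

definition p_CL1 :: "'a topology \<Rightarrow> ('a \<Rightarrow> 'a set \<Rightarrow> 'p option) \<Rightarrow> 'p \<Rightarrow> 'a set \<Rightarrow> 'a set" where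
  "p_CL1 T sg p A = A \<union> {x \<in> topspace T. p_acc_point sg p x A}"

fun p_CL :: "'a topology \<Rightarrow> ('a \<Rightarrow> 'a set \<Rightarrow> 'p option) \<Rightarrow> 'p \<Rightarrow> nat \<Rightarrow> 'a set \<Rightarrow> 'a set" where
  "p_CL T sg p 0 A = A"
| "p_CL T sg p (Suc n) A = p_CL1 T sg p (p_CL T sg p n A)"

definition p_tr :: "'a topology \<Rightarrow> ('a \<Rightarrow> 'a set \<Rightarrow> 'p option) \<Rightarrow> 'p \<Rightarrow> 'a set \<Rightarrow> 'a set" where
  "p_tr T sg p A = (\<Union>n\<in>{1..}. p_CL T sg p n A)"

definition p_closure_disjoint ::
  "'a topology \<Rightarrow> ('a \<Rightarrow> 'a set \<Rightarrow> 'p option) \<Rightarrow> 'p \<Rightarrow> 'a set \<Rightarrow> 'a set \<Rightarrow> bool" where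
  "p_closure_disjoint T sg p E E' \<longleftrightarrow> p_tr T sg p E \<inter> p_tr T sg p E' = {}"

definition p_closure_connected ::
  "'a topology \<Rightarrow> ('a \<Rightarrow> 'a set \<Rightarrow> 'p option) \<Rightarrow> 'p \<Rightarrow> 'a set \<Rightarrow> bool" where
  "p_closure_connected T sg p D \<longleftrightarrow>
     \<not> (\<exists>E E'. E \<noteq> {} \<and> E' \<noteq> {} \<and> E \<union> E' = D \<and> E \<inter> E' = {} \<and>
               p_closure_disjoint T sg p E E')"

end

theory Submission
  imports Defs
begin

definition rconn :: "('a \<Rightarrow> 'a \<Rightarrow> bool) \<Rightarrow> 'a set \<Rightarrow> bool" where
  "rconn R B \<longleftrightarrow> \<not> (\<exists>E E'. E \<noteq> {} \<and> E' \<noteq> {} \<and> E \<union> E' = B \<and> E \<inter> E' = {} \<and>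
      (\<forall>x\<in>E. \<forall>y\<in>E'. \<not> R x y))"

definition rr :: "('a \<Rightarrow> 'a \<Rightarrow> bool) \<Rightarrow> 'a set \<Rightarrow> 'a \<Rightarrow> 'a \<Rightarrow> bool" where
  "rr R B u v \<longleftrightarrow> u \<in> B \<and> v \<in> B \<and> R u v"

definition rcomp :: "('a \<Rightarrow> 'a \<Rightarrow> bool) \<Rightarrow> 'a set \<Rightarrow> 'a \<Rightarrow> 'a set" where
  "rcomp R D x = {y. (rr R D)\<^sup>*\<^sup>* x y}"

lemma conn_path:
  assumes "rconn R B" "x \<in> B" "y \<in> B"
  shows "(rr R B)\<^sup>*\<^sup>* x y"
proof (rule ccontr)
  assume ny: "\<not> (rr R B)\<^sup>*\<^sup>* x y"
  let ?E = "{z\<in>B. (rr R B)\<^sup>*\<^sup>* x z}"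
  let ?E' = "B - ?E"
  have "?E \<noteq> {}" using assms(2) by auto
  moreover have "?E' \<noteq> {}" using assms(3) ny by auto
  moreover have "\<forall>u\<in>?E. \<forall>v\<in>?E'. \<not> R u v"
  proof (intro ballI notI)
    fix u v assume u: "u \<in> ?E" and v: "v \<in> ?E'" and "R u v"
    then have "rr R B u v" by (auto simp: rr_def)
    with u have "(rr R B)\<^sup>*\<^sup>* x v" by auto
    with v show False by auto
  qed
  moreover have "?E \<union> ?E' = B" by blast
  moreover have "?E \<inter> ?E' = {}" by blast
  ultimately have "\<exists>E E'. E \<noteq> {} \<and> E' \<noteq> {} \<and> E \<union> E' = B \<and> E \<inter> E' = {} \<and>
      (\<forall>x\<in>E. \<forall>y\<in>E'. \<not> R x y)" by (intro exI[of _ ?E] exI[of _ ?E']) simp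
  then show False using assms(1) unfolding rconn_def by simp
qed

lemma rr_mono: "B \<subseteq> D \<Longrightarrow> (rr R B)\<^sup>*\<^sup>* x y \<Longrightarrow> (rr R D)\<^sup>*\<^sup>* x y"
proof -
  assume BD: "B \<subseteq> D"
  show "(rr R B)\<^sup>*\<^sup>* x y \<Longrightarrow> (rr R D)\<^sup>*\<^sup>* x y"
  proof (induction rule: rtranclp_induct)
    case base then show ?case by simp
  next
    case (step y z)
    then have "rr R D y z" using BD by (auto simp: rr_def)
    with step(3) show ?case by (rule rtranclp.rtrancl_into_rtrancl)
  qed
qed

lemma rr_in: "(rr R D)\<^sup>*\<^sup>* x y \<Longrightarrow> x \<in> D \<Longrightarrow> y \<in> D"
  by (induction rule: rtranclp_induct) (auto simp: rr_def)

lemma rr_sym: "symp R \<Longrightarrow> (rr R D)\<^sup>*\<^sup>* x y \<Longrightarrow> (rr R D)\<^sup>*\<^sup>* y x"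
proof -
  assume "symp R"
  then have "symp (rr R D)" by (auto simp: rr_def symp_def)
  then have "symp (rr R D)\<^sup>*\<^sup>*" by (rule symp_rtranclp)
  then show "(rr R D)\<^sup>*\<^sup>* x y \<Longrightarrow> (rr R D)\<^sup>*\<^sup>* y x" by (auto dest: sympD)
qed

lemma comp_eq: "symp R \<Longrightarrow> y \<in> rcomp R D x \<Longrightarrow> rcomp R D x = rcomp R D y"
proof -
  assume sy: "symp R" and y: "y \<in> rcomp R D x"
  then have xy: "(rr R D)\<^sup>*\<^sup>* x y" by (simp add: rcomp_def)
  then have yx: "(rr R D)\<^sup>*\<^sup>* y x" by (rule rr_sym[OF sy])
  show "rcomp R D x = rcomp R D y"
  proof
    show "rcomp R D x \<subseteq> rcomp R D y"
    proof
      fix z assume "z \<in> rcomp R D x"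
      then have "(rr R D)\<^sup>*\<^sup>* x z" by (simp add: rcomp_def)
      with yx have "(rr R D)\<^sup>*\<^sup>* y z" by (rule rtranclp_trans)
      then show "z \<in> rcomp R D y" by (simp add: rcomp_def)
    qed
    show "rcomp R D y \<subseteq> rcomp R D x"
    proof
      fix z assume "z \<in> rcomp R D y"
      then have "(rr R D)\<^sup>*\<^sup>* y z" by (simp add: rcomp_def)
      with xy have "(rr R D)\<^sup>*\<^sup>* x z" by (rule rtranclp_trans)
      then show "z \<in> rcomp R D x" by (simp add: rcomp_def)
    qed
  qed
qed

lemma comp_eq2: "symp R \<Longrightarrow> z \<in> rcomp R D x \<Longrightarrow> z \<in> rcomp R D y \<Longrightarrow> rcomp R D x = rcomp R D y"
proof -
  assume sy: "symp R" and a: "z \<in> rcomp R D x" and b: "z \<in> rcomp R D y"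
  have "rcomp R D x = rcomp R D z" by (rule comp_eq[OF sy a])
  moreover have "rcomp R D y = rcomp R D z" by (rule comp_eq[OF sy b])
  ultimately show ?thesis by simp
qed

lemma comp_self: "x \<in> rcomp R D x" by (simp add: rcomp_def)

lemma comp_sub: "x \<in> D \<Longrightarrow> rcomp R D x \<subseteq> D"
proof
  fix y assume "x \<in> D" "y \<in> rcomp R D x"
  then show "y \<in> D" using rr_in[of R D x y] by (simp add: rcomp_def)
qed

lemma comp_closed:
  assumes "(rr R D)\<^sup>*\<^sup>* x z" "x \<in> E" "E \<union> E' = rcomp R D x"
    and "\<forall>u\<in>E. \<forall>v\<in>E'. \<not> R u v"
  shows "z \<in> E"
  using assms(1)
proof (induction rule: rtranclp_induct)
  case base then show ?case using assms(2) by simp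
next
  case (step y z)
  have "z \<in> rcomp R D x" using step(1,2) unfolding rcomp_def by auto
  then have "z \<in> E \<or> z \<in> E'" using assms(3) by auto
  moreover have "R y z" using step(2) by (simp add: rr_def)
  ultimately show ?case using step(3) assms(4) by blast
qed

lemma comp_conn:
  assumes "symp R"
  shows "rconn R (rcomp R D x)"
  unfolding rconn_def
proof
  assume "\<exists>E E'. E \<noteq> {} \<and> E' \<noteq> {} \<and> E \<union> E' = rcomp R D x \<and> E \<inter> E' = {} \<and>
      (\<forall>x\<in>E. \<forall>y\<in>E'. \<not> R x y)"
  then obtain E E' where h: "E \<noteq> {}" "E' \<noteq> {}" "E \<union> E' = rcomp R D x" "E \<inter> E' = {}"
    "\<forall>x\<in>E. \<forall>y\<in>E'. \<not> R x y" by blast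
  have h': "\<forall>u\<in>E'. \<forall>v\<in>E. \<not> R u v"
  proof (intro ballI notI)
    fix u v assume "u \<in> E'" "v \<in> E" "R u v"
    moreover have "R v u" using assms \<open>R u v\<close> by (rule sympD)
    ultimately show False using h(5) by blast
  qed
  have "x \<in> E \<or> x \<in> E'" using h(3) comp_self[of x R D] by (metis Un_iff)
  then show False
  proof
    assume "x \<in> E"
    then have "rcomp R D x \<subseteq> E" using comp_closed[OF _ _ h(3) h(5)] unfolding rcomp_def by (metis mem_Collect_eq subsetI)
    then show False using h by blast
  next
    assume "x \<in> E'"
    moreover have "E' \<union> E = rcomp R D x" using h(3) by blast
    ultimately have "rcomp R D x \<subseteq> E'" using comp_closed[OF _ _ _ h'] unfolding rcomp_def by (metis mem_Collect_eq subsetI)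
    then show False using h by blast
  qed
qed

lemma unique_part:
  assumes symp: "symp R" and fin: "finite D"
    and Q: "partition_on D Q" "\<forall>B\<in>Q. rconn R B" "\<forall>S\<subseteq>Q. 2 \<le> card S \<longrightarrow> \<not> rconn R (\<Union>S)"
    and B: "B \<in> Q" "x \<in> B"
  shows "B = rcomp R D x"
proof -
  have UQ: "\<Union>Q = D" using Q(1) by (simp add: partition_on_def)
  have dj: "disjoint Q" using Q(1) by (simp add: partition_on_def)
  have xD: "x \<in> D" using B UQ by blast
  have "Q \<subseteq> Pow D" using UQ by blast
  then have finQ: "finite Q" using fin by (simp add: finite_subset)
  define S where "S = {B'\<in>Q. B' \<inter> rcomp R D x \<noteq> {}}"
  have sub: "B' \<subseteq> rcomp R D x" if "B' \<in> S" for B'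
  proof
    fix z assume z: "z \<in> B'"
    from that obtain y where y: "y \<in> B'" "y \<in> rcomp R D x" unfolding S_def by blast
    have "B' \<subseteq> D" using that UQ unfolding S_def by blast
    have B'Q: "B' \<in> Q" using that unfolding S_def by simp
    have "(rr R B')\<^sup>*\<^sup>* y z" by (rule conn_path[OF bspec[OF Q(2) B'Q] y(1) z])
    with \<open>B' \<subseteq> D\<close> have "(rr R D)\<^sup>*\<^sup>* y z" by (rule rr_mono)
    then have "z \<in> rcomp R D y" by (simp add: rcomp_def)
    then show "z \<in> rcomp R D x" using comp_eq[OF symp y(2)] by simp
  qed
  have US: "\<Union>S = rcomp R D x"
  proof
    show "\<Union>S \<subseteq> rcomp R D x" using sub by blast
    show "rcomp R D x \<subseteq> \<Union>S"
    proof
      fix z assume z: "z \<in> rcomp R D x"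
      then have "z \<in> D" using comp_sub[OF xD] by blast
      then obtain B' where "B' \<in> Q" "z \<in> B'" using UQ by blast
      then show "z \<in> \<Union>S" using z unfolding S_def by blast
    qed
  qed
  have BS: "B \<in> S" using B comp_self[of x R D] unfolding S_def by blast
  have finS: "finite S" using finQ unfolding S_def by simp
  have "\<not> 2 \<le> card S"
  proof
    assume "2 \<le> card S"
    moreover have "S \<subseteq> Q" unfolding S_def by blast
    ultimately have "\<not> rconn R (\<Union>S)" using Q(3) by blast
    then show False using US comp_conn[OF symp] by simp
  qed
  moreover have "card S \<noteq> 0" using finS BS by auto
  ultimately have "card S = 1" by simp
  then obtain C where "S = {C}" by (rule card_1_singletonE)
  then have "S = {B}" using BS by simp
  then show ?thesis using US by simp
qed

lemma comp_disj:
  assumes "symp R" "rcomp R D a \<noteq> rcomp R D b"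
  shows "rcomp R D a \<inter> rcomp R D b = {}"
proof (rule ccontr)
  assume "rcomp R D a \<inter> rcomp R D b \<noteq> {}"
  then obtain z where "z \<in> rcomp R D a" "z \<in> rcomp R D b" by blast
  then have "rcomp R D a = rcomp R D b" by (rule comp_eq2[OF assms(1)])
  with assms(2) show False by simp
qed

lemma abstract_part:
  assumes symp: "symp R" and fin: "finite D"
  shows "\<exists>!Q. partition_on D Q \<and> (\<forall>B\<in>Q. rconn R B) \<and>
    (\<forall>S\<subseteq>Q. 2 \<le> card S \<longrightarrow> \<not> rconn R (\<Union>S))"
proof
  let ?Q = "rcomp R D ` D"
  show "partition_on D ?Q \<and> (\<forall>B\<in>?Q. rconn R B) \<and>
    (\<forall>S\<subseteq>?Q. 2 \<le> card S \<longrightarrow> \<not> rconn R (\<Union>S))"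
  proof (intro conjI)
    show "partition_on D ?Q"
    proof (rule partition_onI)
      show "\<Union>?Q = D"
      proof
        show "\<Union>?Q \<subseteq> D"
        proof
          fix y assume "y \<in> \<Union>?Q"
          then obtain x where x: "x \<in> D" "y \<in> rcomp R D x" by (auto simp del: Union_iff)
          then show "y \<in> D" using comp_sub[of x D R] by (auto simp del: Union_iff)
        qed
        show "D \<subseteq> \<Union>?Q"
        proof
          fix x assume "x \<in> D"
          then have "rcomp R D x \<in> ?Q" by (rule imageI)
          then show "x \<in> \<Union>?Q" by (rule UnionI[OF _ comp_self])
        qed
      qed
      show "disjnt p q" if pq: "p \<in> ?Q" "q \<in> ?Q" "p \<noteq> q" for p q
      proof -
        obtain a where "p = rcomp R D a" using pq(1) by blast
        moreover obtain b where "q = rcomp R D b" using pq(2) by blast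
        ultimately show ?thesis using comp_disj[OF symp, of D a b] pq(3) unfolding disjnt_def by simp
      qed
      show "{} \<notin> ?Q"
      proof
        assume "{} \<in> ?Q"
        then obtain a where "{} = rcomp R D a" by blast
        then show False using comp_self[of a R D] by simp
      qed
    qed
    show "\<forall>B\<in>?Q. rconn R B" using comp_conn[OF symp] by blast
    show "\<forall>S\<subseteq>?Q. 2 \<le> card S \<longrightarrow> \<not> rconn R (\<Union>S)"
    proof (intro allI impI)
      fix S assume S: "S \<subseteq> ?Q" "2 \<le> card S"
      have finS: "finite S" using S(2) by (metis card.infinite not_numeral_le_zero)
      have "\<not> card S \<le> Suc 0" using S(2) by simp
      then have "\<not> (\<forall>a1\<in>S. \<forall>a2\<in>S. a1 = a2)" using card_le_Suc0_iff_eq[OF finS] by simp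
      then obtain C1 C2 where C: "C1 \<in> S" "C2 \<in> S" "C1 \<noteq> C2" by blast
      obtain a where a: "a \<in> D" "C1 = rcomp R D a" using C(1) S(1) by blast
      obtain a2 where a2: "C2 = rcomp R D a2" using C(2) S(1) by blast
      let ?E = "C1" let ?E' = "\<Union>(S - {C1})"
      have "a \<in> ?E" using a comp_self[of a R D] by simp
      then have 1: "?E \<noteq> {}" by blast
      have "a2 \<in> ?E'" using a2 C comp_self[of a2 R D] by blast
      then have 2: "?E' \<noteq> {}" by blast
      have 3: "?E \<union> ?E' = \<Union>S" using C by blast
      have 4: "?E \<inter> ?E' = {}"
      proof -
        have "C1 \<inter> C' = {}" if C'S: "C' \<in> S" "C' \<noteq> C1" for C'
        proof -
          obtain b where "C' = rcomp R D b" using C'S(1) S(1) by blast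
          then show ?thesis using comp_disj[OF symp, of D a b] C'S(2) a(2) by auto
        qed
        then show ?thesis by blast
      qed
      have 5: "\<forall>u\<in>?E. \<forall>v\<in>?E'. \<not> R u v"
      proof (intro ballI notI)
        fix u v assume u: "u \<in> ?E" and v: "v \<in> ?E'" and r: "R u v"
        obtain C' where C': "C' \<in> S" "C' \<noteq> C1" "v \<in> C'" using v by blast
        obtain b where b: "b \<in> D" "C' = rcomp R D b" using C'(1) S(1) by blast
        have uD: "u \<in> D" using u a comp_sub[of a D R] by blast
        have vD: "v \<in> D" using C'(3) b comp_sub[of b D R] by blast
        have "(rr R D)\<^sup>*\<^sup>* a u" using u a by (simp add: rcomp_def)
        moreover have "rr R D u v" using uD vD r by (simp add: rr_def)
        ultimately have "(rr R D)\<^sup>*\<^sup>* a v" by (rule rtranclp.rtrancl_into_rtrancl)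
        then have "v \<in> rcomp R D a" by (simp add: rcomp_def)
        moreover have "v \<in> rcomp R D b" using C'(3) b(2) by simp
        ultimately have "rcomp R D a = rcomp R D b" by (rule comp_eq2[OF symp])
        then show False using a b C'(2) by simp
      qed
      show "\<not> rconn R (\<Union>S)" unfolding rconn_def
        by (rule notI, erule notE, rule exI[of _ ?E], rule exI[of _ ?E']) (use 1 2 3 4 5 in blast)
    qed
  qed
next
  fix Q assume Q: "partition_on D Q \<and> (\<forall>B\<in>Q. rconn R B) \<and>
    (\<forall>S\<subseteq>Q. 2 \<le> card S \<longrightarrow> \<not> rconn R (\<Union>S))"
  have Q1: "partition_on D Q" and Q2: "\<forall>B\<in>Q. rconn R B"
    and Q3: "\<forall>S\<subseteq>Q. 2 \<le> card S \<longrightarrow> \<not> rconn R (\<Union>S)" using Q by blast+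
  have eq: "B = rcomp R D x" if "B \<in> Q" "x \<in> B" for B x
    by (rule unique_part[OF symp fin Q1 Q2 Q3 that])
  have UQ: "\<Union>Q = D" and ne: "{} \<notin> Q" using Q1 by (auto simp: partition_on_def)
  show "Q = rcomp R D ` D"
  proof
    show "Q \<subseteq> rcomp R D ` D"
    proof
      fix B assume B: "B \<in> Q"
      then have "B \<noteq> {}" using ne by blast
      then obtain x where x: "x \<in> B" by blast
      then have "x \<in> D" using B UQ by blast
      moreover have "B = rcomp R D x" using eq B x by blast
      ultimately show "B \<in> rcomp R D ` D" by blast
    qed
    show "rcomp R D ` D \<subseteq> Q"
    proof
      fix C assume "C \<in> rcomp R D ` D"
      then obtain x where x: "x \<in> D" "C = rcomp R D x" by blast
      then obtain B where B: "B \<in> Q" "x \<in> B" using UQ by blast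
      then have "B = rcomp R D x" by (rule eq)
      then show "C \<in> Q" using B x by simp
    qed
  qed
qed

lemma uniqU:
  assumes "typed_top_space T P le sg" "p \<in> P" "x \<in> topspace T"
    "sg x U = Some p" "sg x V = Some p"
  shows "U = V"
proof -
  have "\<forall>p\<in>P. le p p" using assms(1) unfolding typed_top_space_def by (elim conjE) assumption
  with assms(2) have pp: "le p p" by blast
  have H: "\<forall>x\<in>topspace T. \<forall>U V. sg x U \<noteq> None \<longrightarrow> sg x V \<noteq> None \<longrightarrow>
          (le (the (sg x U)) (the (sg x V)) \<longleftrightarrow> U \<subseteq> V)"
    using assms(1) unfolding typed_top_space_def by (elim conjE) assumption
  have "le (the (sg x U)) (the (sg x V)) \<longleftrightarrow> U \<subseteq> V"
    using H[rule_format, OF assms(3), of U V] assms(4,5) by simp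
  moreover have "le (the (sg x V)) (the (sg x U)) \<longleftrightarrow> V \<subseteq> U"
    using H[rule_format, OF assms(3), of V U] assms(4,5) by simp
  ultimately show ?thesis using pp assms(4,5) by simp
qed

lemma acc_UN:
  assumes "typed_top_space T P le sg" "p \<in> P" "x \<in> topspace T" "I \<noteq> {}"
  shows "p_acc_point sg p x (\<Union>i\<in>I. f i) \<longleftrightarrow> (\<exists>i\<in>I. p_acc_point sg p x (f i))"
proof (cases "\<exists>U. sg x U = Some p")
  case True
  then obtain U where U: "sg x U = Some p" by blast
  have all: "sg x V = Some p \<longleftrightarrow> V = U" for V
  proof
    assume "sg x V = Some p" then show "V = U" using uniqU[OF assms(1-3) _ U] by simp
  next
    assume "V = U" then show "sg x V = Some p" using U by simp
  qed
  show ?thesis unfolding p_acc_point_def all by auto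
next
  case False
  then have "\<forall>A. p_acc_point sg p x A" unfolding p_acc_point_def by simp
  then show ?thesis using assms(4) by auto
qed

lemma CL1_UN:
  assumes "typed_top_space T P le sg" "p \<in> P" "I \<noteq> {}"
  shows "p_CL1 T sg p (\<Union>i\<in>I. f i) = (\<Union>i\<in>I. p_CL1 T sg p (f i))"
proof -
  have "{x\<in>topspace T. p_acc_point sg p x (\<Union>i\<in>I. f i)} =
        (\<Union>i\<in>I. {x\<in>topspace T. p_acc_point sg p x (f i)})"
    using acc_UN[OF assms(1,2) _ assms(3), of _ f] by auto
  then show ?thesis unfolding p_CL1_def by (simp add: UN_Un_distrib)
qed

lemma CL_UN:
  assumes "typed_top_space T P le sg" "p \<in> P" "I \<noteq> {}"
  shows "p_CL T sg p n (\<Union>i\<in>I. f i) = (\<Union>i\<in>I. p_CL T sg p n (f i))"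
proof (induction n)
  case 0 then show ?case by simp
next
  case (Suc n) then show ?case using CL1_UN[OF assms, of "\<lambda>i. p_CL T sg p n (f i)"] by simp
qed

lemma tr_UN:
  assumes "typed_top_space T P le sg" "p \<in> P" "I \<noteq> {}"
  shows "p_tr T sg p (\<Union>i\<in>I. f i) = (\<Union>i\<in>I. p_tr T sg p (f i))"
  unfolding p_tr_def CL_UN[OF assms] by blast

lemma tr_sing:
  assumes "typed_top_space T P le sg" "p \<in> P" "E \<noteq> {}"
  shows "p_tr T sg p E = (\<Union>x\<in>E. p_tr T sg p {x})"
  using tr_UN[OF assms, of "\<lambda>x. {x}"] by simp

lemma conn_eq:
  assumes "typed_top_space T P le sg" "p \<in> P"
  shows "p_closure_connected T sg p B \<longleftrightarrow>
    rconn (\<lambda>x y. p_tr T sg p {x} \<inter> p_tr T sg p {y} \<noteq> {}) B"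
proof -
  have eqv: "p_closure_disjoint T sg p E E' \<longleftrightarrow>
     (\<forall>x\<in>E. \<forall>y\<in>E'. \<not> p_tr T sg p {x} \<inter> p_tr T sg p {y} \<noteq> {})"
    if "E \<noteq> {}" "E' \<noteq> {}" for E E'
  proof -
    have "p_tr T sg p E \<inter> p_tr T sg p E' = (\<Union>x\<in>E. \<Union>y\<in>E'. p_tr T sg p {x} \<inter> p_tr T sg p {y})"
      unfolding tr_sing[OF assms that(1)] tr_sing[OF assms that(2)] by blast
    then show ?thesis unfolding p_closure_disjoint_def by auto
  qed
  show ?thesis unfolding p_closure_connected_def rconn_def
  proof (intro iffI; elim contrapos_nn exE conjE)
    fix E E' assume h: "E \<noteq> {}" "E' \<noteq> {}" "E \<union> E' = B" "E \<inter> E' = {}"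
      "\<forall>x\<in>E. \<forall>y\<in>E'. \<not> p_tr T sg p {x} \<inter> p_tr T sg p {y} \<noteq> {}"
    then show "\<exists>E E'. E \<noteq> {} \<and> E' \<noteq> {} \<and> E \<union> E' = B \<and> E \<inter> E' = {} \<and> p_closure_disjoint T sg p E E'"
      using eqv[OF h(1,2)] by blast
  next
    fix E E' assume h: "E \<noteq> {}" "E' \<noteq> {}" "E \<union> E' = B" "E \<inter> E' = {}"
      "p_closure_disjoint T sg p E E'"
    then show "\<exists>E E'. E \<noteq> {} \<and> E' \<noteq> {} \<and> E \<union> E' = B \<and> E \<inter> E' = {} \<and>
      (\<forall>x\<in>E. \<forall>y\<in>E'. \<not> p_tr T sg p {x} \<inter> p_tr T sg p {y} \<noteq> {})"
      using eqv[OF h(1,2)] by blast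
  qed
qed

theorem lemma3p9:
  fixes T :: "'a topology" and P :: "'p set" and le :: "'p \<Rightarrow> 'p \<Rightarrow> bool"
    and sg :: "'a \<Rightarrow> 'a set \<Rightarrow> 'p option" and D :: "'a set" and p :: 'p
  assumes "typed_top_space T P le sg"
    and "finite (topspace T)"
    and "D \<subseteq> topspace T"
    and "p \<in> P"
  shows "\<exists>!Q. partition_on D Q \<and>
              (\<forall>B\<in>Q. p_closure_connected T sg p B) \<and>
              (\<forall>S\<subseteq>Q. 2 \<le> card S \<longrightarrow> \<not> p_closure_connected T sg p (\<Union>S))"
proof -
  have fin: "finite D" using assms(2,3) finite_subset by blast
  have sy: "symp (\<lambda>x y. p_tr T sg p {x} \<inter> p_tr T sg p {y} \<noteq> {})"
    by (auto simp: symp_def)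
  show ?thesis unfolding conn_eq[OF assms(1,4)] using abstract_part[OF sy fin] .
qed

end
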